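(* Let $n\equiv0\pmod 4$ and let $C$ be a Type III code of length $n$. Let $\mathrm{III}_n$ be the set of all Type III codes of length $n$. Then: \[ \text{(i)}\quad \frac1{|\mathrm{III}_n|}\sum_{D\in\mathrm{III}_n}|C\cap D|=4-\frac{4}{3^{n/2-1}+1}; \] \[ \text{(ii)}\quad \frac1{|\mathrm{III}_n|}\sum_{D\in\mathrm{III}_n}|C\cap D|^2=\frac{40\,(3^{n/2})^2}{(3^{n/2}+3)(3^{n/2}+9)}. \]
   Context: A Type III code of length $n$ ($n\equiv0\pmod4$) is a self-dual linear code $C\subseteq\mathbb F_3^n$, i.e. $C=C^\perp$ with respect to the inner product $u\cdot v=\sum_i u_iv_i$, in which every codeword has Hamming weight divisible by $3$. Such codes have dimension $n/2$. *)

theory Defs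
  imports "HOL-Analysis.Analysis" "HOL-Library.Numeral_Type"
begin

text \<open>Ternary vectors of length n: functions nat => 3 (the type 3 is Z/3Z = F_3)
  vanishing outside {0..<n}.\<close>

definition tvecs :: "nat \<Rightarrow> (nat \<Rightarrow> 3) set" where
  "tvecs n = {v. \<forall>i\<ge>n. v i = 0}"

definition tinner :: "nat \<Rightarrow> (nat \<Rightarrow> 3) \<Rightarrow> (nat \<Rightarrow> 3) \<Rightarrow> 3" where
  "tinner n u v = (\<Sum>i<n. u i * v i)"

definition hweight :: "nat \<Rightarrow> (nat \<Rightarrow> 3) \<Rightarrow> nat" where
  "hweight n v = card {i. i < n \<and> v i \<noteq> 0}"

definition linear_code :: "nat \<Rightarrow> (nat \<Rightarrow> 3) set \<Rightarrow> bool" where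
  "linear_code n C \<longleftrightarrow> C \<subseteq> tvecs n \<and> (\<lambda>_. 0) \<in> C
     \<and> (\<forall>u\<in>C. \<forall>v\<in>C. (\<lambda>i. u i + v i) \<in> C)
     \<and> (\<forall>a::3. \<forall>u\<in>C. (\<lambda>i. a * u i) \<in> C)"

definition dual_code :: "nat \<Rightarrow> (nat \<Rightarrow> 3) set \<Rightarrow> (nat \<Rightarrow> 3) set" where
  "dual_code n C = {u \<in> tvecs n. \<forall>v\<in>C. tinner n u v = 0}"

definition self_dual :: "nat \<Rightarrow> (nat \<Rightarrow> 3) set \<Rightarrow> bool" where
  "self_dual n C \<longleftrightarrow> linear_code n C \<and> C = dual_code n C"

definition type_III :: "nat \<Rightarrow> (nat \<Rightarrow> 3) set \<Rightarrow> bool" where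
  "type_III n C \<longleftrightarrow> self_dual n C \<and> (\<forall>v\<in>C. 3 dvd hweight n v)"

definition III :: "nat \<Rightarrow> (nat \<Rightarrow> 3) set set" where
  "III n = {C. type_III n C}"

end

theory Submission
  imports Defs
begin

lemma F3_cases: "(a::3) = 0 \<or> a = 1 \<or> a = 2"
proof (cases a)
  case (of_int z)
  then have "z = 0 \<or> z = 1 \<or> z = 2" by auto
  then show ?thesis using of_int by auto
qed

lemma three0[simp]: "(3::3) = 0" by simp
lemma four3: "(4::3) = 1" by simp
lemma m1_3: "(-1::3) = 2" by simp
lemma UNIV3: "(UNIV::3 set) = {0,1,2}" using F3_cases by auto
lemma F3_nzmul: "(a::3) \<noteq> 0 \<Longrightarrow> b \<noteq> 0 \<Longrightarrow> a * b \<noteq> 0"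
  using F3_cases[of a] F3_cases[of b] by auto
lemma sq_nz: "(a::3) \<noteq> 0 \<Longrightarrow> a * a = 1" using F3_cases[of a] by auto
lemma of_nat3: "(of_nat k :: 3) = 0 \<longleftrightarrow> 3 dvd k"
  using of_nat_eq_0_iff_char_dvd[where 'a=3] by simp
lemma sum3: "(\<Sum>a\<in>(UNIV::3 set). f a) = f 0 + f 1 + f 2"
proof -
  have d: "(0::3) \<notin> {1,2}" "(1::3) \<notin> {2}" by auto
  have "(\<Sum>a\<in>(UNIV::3 set). f a) = (\<Sum>a\<in>insert 0 (insert 1 {2}). f a)" unfolding UNIV3 ..
  also have "\<dots> = f 0 + (f 1 + (f 2 + 0))" using sum.insert[of "insert 1 {2}" 0 f] sum.insert[of "{2}" 1 f] d by simp
  finally show ?thesis by (simp add: add.assoc)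
qed

lemma tinner_comm: "tinner n u v = tinner n v u"
  unfolding tinner_def by (simp add: mult.commute)

lemma tinner_Suc: "tinner (Suc n) u v = tinner n u v + u n * v n"
  unfolding tinner_def by simp

lemma tinner_cong: "(\<And>i. i < n \<Longrightarrow> u i = u' i) \<Longrightarrow> tinner n u v = tinner n u' v"
  unfolding tinner_def by (rule sum.cong) auto

lemma tinner_add_l: "tinner n (\<lambda>i. u i + w i) v = tinner n u v + tinner n w v"
  unfolding tinner_def by (simp add: distrib_right sum.distrib)
lemma tinner_add_r: "tinner n v (\<lambda>i. u i + w i) = tinner n v u + tinner n v w"
  unfolding tinner_def by (simp add: distrib_left sum.distrib)
lemma tinner_diff_l: "tinner n (\<lambda>i. u i - w i) v = tinner n u v - tinner n w v"
  unfolding tinner_def by (simp add: left_diff_distrib sum_subtractf)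
lemma tinner_diff_r: "tinner n v (\<lambda>i. u i - w i) = tinner n v u - tinner n v w"
  unfolding tinner_def by (simp add: right_diff_distrib sum_subtractf)
lemma tinner_sc_l: "tinner n (\<lambda>i. a * u i) v = a * tinner n u v"
  unfolding tinner_def by (simp add: sum_distrib_left mult.assoc)
lemma tinner_sc_r: "tinner n v (\<lambda>i. a * u i) = a * tinner n v u"
  unfolding tinner_def by (simp add: sum_distrib_left algebra_simps)
lemma tinner_0_l[simp]: "tinner n (\<lambda>i. 0) v = 0"
  unfolding tinner_def by simp
lemma tinner_0_r[simp]: "tinner n v (\<lambda>i. 0) = 0"
  unfolding tinner_def by simp

lemma tinner_delta_l: "j < n \<Longrightarrow> tinner n (\<lambda>i. if i = j then c else 0) v = c * v j"
proof -
  assume j: "j < n"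
  have "tinner n (\<lambda>i. if i = j then c else 0) v = (\<Sum>i<n. if i = j then c * v j else 0)"
    unfolding tinner_def by (rule sum.cong) auto
  also have "\<dots> = c * v j" using j by (simp add: sum.delta)
  finally show ?thesis .
qed

lemmas tinner_lin = tinner_add_l tinner_add_r tinner_diff_l tinner_diff_r tinner_sc_l tinner_sc_r

lemma tvecs_add[intro]: "u \<in> tvecs n \<Longrightarrow> v \<in> tvecs n \<Longrightarrow> (\<lambda>i. u i + v i) \<in> tvecs n"
  unfolding tvecs_def by auto
lemma tvecs_diff[intro]: "u \<in> tvecs n \<Longrightarrow> v \<in> tvecs n \<Longrightarrow> (\<lambda>i. u i - v i) \<in> tvecs n"
  unfolding tvecs_def by auto
lemma tvecs_sc[intro]: "u \<in> tvecs n \<Longrightarrow> (\<lambda>i. a * u i) \<in> tvecs n"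
  unfolding tvecs_def by auto
lemma tvecs_0[intro,simp]: "(\<lambda>i. 0) \<in> tvecs n"
  unfolding tvecs_def by auto

lemma tvecs_Suc_iff: "v \<in> tvecs (Suc n) \<longleftrightarrow> v(n := 0) \<in> tvecs n"
proof
  assume a: "v \<in> tvecs (Suc n)" show "v(n := 0) \<in> tvecs n" unfolding tvecs_def
  proof (intro CollectI allI impI)
    fix i assume "n \<le> i"
    then show "(v(n:=0)) i = 0" using a unfolding tvecs_def by (cases "i = n") auto
  qed
next
  assume a: "v(n := 0) \<in> tvecs n"
  show "v \<in> tvecs (Suc n)" unfolding tvecs_def
  proof (intro CollectI allI impI)
    fix i assume "Suc n \<le> i"
    then have "n \<le> i" "i \<noteq> n" by auto
    then show "v i = 0" using a unfolding tvecs_def by (metis (mono_tags) fun_upd_other mem_Collect_eq)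
  qed
qed

lemma tvecs_mono: "v \<in> tvecs n \<Longrightarrow> n \<le> m \<Longrightarrow> v \<in> tvecs m"
  unfolding tvecs_def by auto

lemma finite_tvecs: "finite (tvecs n)"
proof (induction n)
  case 0
  have "tvecs 0 = {\<lambda>i. 0}" unfolding tvecs_def by auto
  then show ?case by simp
next
  case (Suc n)
  have "tvecs (Suc n) \<subseteq> (\<lambda>(w,s). w(n:=s)) ` (tvecs n \<times> UNIV)"
  proof
    fix v assume "v \<in> tvecs (Suc n)"
    then have "v(n:=0) \<in> tvecs n" using tvecs_Suc_iff by blast
    then show "v \<in> (\<lambda>(w,s). w(n:=s)) ` (tvecs n \<times> UNIV)"
      by (intro rev_image_eqI[of "(v(n:=0), v n)"]) auto
  qed
  then show ?case using Suc by (auto intro: finite_subset)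
qed

lemma card_tvecs: "card (tvecs n) = 3 ^ n"
proof (induction n)
  case 0
  have "tvecs 0 = {\<lambda>i. 0}" unfolding tvecs_def by auto
  then show ?case by simp
next
  case (Suc n)
  have eq: "tvecs (Suc n) = (\<lambda>(w,s). w(n:=s)) ` (tvecs n \<times> UNIV)"
  proof
    show "tvecs (Suc n) \<subseteq> (\<lambda>(w,s). w(n:=s)) ` (tvecs n \<times> UNIV)"
    proof
      fix v assume "v \<in> tvecs (Suc n)"
      then have "v(n:=0) \<in> tvecs n" using tvecs_Suc_iff by blast
      then show "v \<in> (\<lambda>(w,s). w(n:=s)) ` (tvecs n \<times> UNIV)"
        by (intro rev_image_eqI[of "(v(n:=0), v n)"]) auto
    qed
    show "(\<lambda>(w,s). w(n:=s)) ` (tvecs n \<times> UNIV) \<subseteq> tvecs (Suc n)"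
      unfolding tvecs_def by auto
  qed
  have inj: "inj_on (\<lambda>(w,s). w(n:=s)) (tvecs n \<times> (UNIV::3 set))"
  proof (rule inj_onI, clarsimp)
    fix w s w' s' assume w: "w \<in> tvecs n" "w' \<in> tvecs n" and e: "w(n := s) = w'(n := s')"
    have "s = s'" using fun_cong[OF e, of n] by simp
    moreover have "w = w'"
    proof
      fix i show "w i = w' i"
        using fun_cong[OF e, of i] w unfolding tvecs_def by (cases "i = n") auto
    qed
    ultimately show "w = w' \<and> s = s'" by simp
  qed
  have "card (tvecs (Suc n)) = card (tvecs n \<times> (UNIV::3 set))"
    unfolding eq by (rule card_image[OF inj])
  also have "\<dots> = 3^n * 3" using Suc by (simp add: card_cartesian_product)
  finally show ?case by simp
qed

lemma ext_inj: "inj_on (\<lambda>(w,s). w(n:=s)) (tvecs n \<times> (UNIV::3 set))"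
proof (rule inj_onI, clarsimp)
  fix w s w' s' assume w: "w \<in> tvecs n" "w' \<in> tvecs n" and e: "w(n := s) = w'(n := s')"
  have "s = s'" using fun_cong[OF e, of n] by simp
  moreover have "w = w'"
  proof
    fix i show "w i = w' i"
      using fun_cong[OF e, of i] w unfolding tvecs_def by (cases "i = n") auto
  qed
  ultimately show "w = w' \<and> s = s'" by simp
qed

lemma card_ext: "P \<subseteq> tvecs n \<Longrightarrow> card ((\<lambda>(w,s). w(n:=s)) ` (P \<times> (UNIV::3 set))) = 3 * card P"
proof -
  assume P: "P \<subseteq> tvecs n"
  have "inj_on (\<lambda>(w,s). w(n:=s)) (P \<times> (UNIV::3 set))"
    using inj_on_subset[OF ext_inj[of n], of "P \<times> UNIV"] P by auto
  then show ?thesis by (simp add: card_image card_cartesian_product)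
qed

lemma lin_sub: "linear_code n C \<Longrightarrow> C \<subseteq> tvecs n" unfolding linear_code_def by auto
lemma lin_0: "linear_code n C \<Longrightarrow> (\<lambda>i. 0) \<in> C" unfolding linear_code_def by auto
lemma lin_add: "linear_code n C \<Longrightarrow> u \<in> C \<Longrightarrow> v \<in> C \<Longrightarrow> (\<lambda>i. u i + v i) \<in> C"
  unfolding linear_code_def by auto
lemma lin_sc: "linear_code n C \<Longrightarrow> u \<in> C \<Longrightarrow> (\<lambda>i. a * u i) \<in> C"
  unfolding linear_code_def by auto
lemma lin_diff: "linear_code n C \<Longrightarrow> u \<in> C \<Longrightarrow> v \<in> C \<Longrightarrow> (\<lambda>i. u i - v i) \<in> C"
proof -
  assume C: "linear_code n C" "u \<in> C" "v \<in> C"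
  then have "(\<lambda>i. u i + (-1) * v i) \<in> C" by (intro lin_add lin_sc) auto
  then show ?thesis by simp
qed

lemma dual_sub: "dual_code n S \<subseteq> tvecs n" unfolding dual_code_def by auto

lemma dual_card: "linear_code n S \<Longrightarrow> card S * card (dual_code n S) = 3 ^ n"
proof (induction n arbitrary: S)
  case 0
  have t0: "tvecs 0 = {\<lambda>i. 0}" unfolding tvecs_def by auto
  have "S = {\<lambda>i. 0}" using lin_sub[OF 0] lin_0[OF 0] t0 by auto
  moreover have "dual_code 0 S = {\<lambda>i. 0}" unfolding dual_code_def t0 by (auto simp: tinner_def)
  ultimately show ?case by simp
next
  case (Suc n)
  note S = Suc.prems
  define S0 where "S0 = {v\<in>S. v n = 0}"
  have S0t: "S0 \<subseteq> tvecs n"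
  proof
    fix v assume "v \<in> S0"
    then have "v \<in> tvecs (Suc n)" "v n = 0" using lin_sub[OF S] unfolding S0_def by auto
    then show "v \<in> tvecs n" using tvecs_Suc_iff[of v n] by (simp add: fun_upd_idem)
  qed
  have linS0: "linear_code n S0"
    unfolding linear_code_def using S0t lin_0[OF S] lin_add[OF S] lin_sc[OF S]
    unfolding S0_def by auto
  note IH = Suc.IH[OF linS0]
  have ipart: "tinner n (u(n:=s)) v = tinner n u v" for u v s
    by (rule tinner_cong) auto
  show ?case
  proof (cases "\<forall>v\<in>S. v n = 0")
    case True
    then have "S0 = S" unfolding S0_def by auto
    have "dual_code (Suc n) S = (\<lambda>(w,s). w(n:=s)) ` (dual_code n S0 \<times> UNIV)"
    proof
      show "dual_code (Suc n) S \<subseteq> (\<lambda>(w,s). w(n:=s)) ` (dual_code n S0 \<times> UNIV)"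
      proof
        fix u assume u: "u \<in> dual_code (Suc n) S"
        have "u(n:=0) \<in> dual_code n S0"
          unfolding dual_code_def
        proof (intro CollectI conjI ballI)
          show "u(n:=0) \<in> tvecs n" using u tvecs_Suc_iff unfolding dual_code_def by auto
          fix v assume v: "v \<in> S0"
          have "tinner (Suc n) u v = 0" using u v \<open>S0 = S\<close> unfolding dual_code_def by auto
          moreover have "v n = 0" using v True \<open>S0 = S\<close> by auto
          ultimately show "tinner n (u(n := 0)) v = 0" by (simp add: ipart tinner_Suc)
        qed
        then show "u \<in> (\<lambda>(w,s). w(n:=s)) ` (dual_code n S0 \<times> UNIV)"
          by (intro rev_image_eqI[of "(u(n:=0), u n)"]) auto
      qed
      show "(\<lambda>(w,s). w(n:=s)) ` (dual_code n S0 \<times> UNIV) \<subseteq> dual_code (Suc n) S"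
      proof clarify
        fix w s assume w: "w \<in> dual_code n S0"
        show "w(n:=s) \<in> dual_code (Suc n) S" unfolding dual_code_def
        proof (intro CollectI conjI ballI)
          show "w(n:=s) \<in> tvecs (Suc n)" using w tvecs_Suc_iff[of "w(n:=s)" n] dual_sub[of n S0]
            by (auto simp: fun_upd_idem tvecs_def)
          fix v assume v: "v \<in> S"
          then have "v n = 0" using True by auto
          then show "tinner (Suc n) (w(n := s)) v = 0" using w v \<open>S0 = S\<close>
            unfolding dual_code_def by (simp add: ipart tinner_Suc)
        qed
      qed
    qed
    then have "card (dual_code (Suc n) S) = 3 * card (dual_code n S0)"
      using card_ext[OF dual_sub] by simp
    then show ?thesis using IH \<open>S0 = S\<close> by simp
  next
    case False
    then obtain z0 where z0: "z0 \<in> S" "z0 n \<noteq> 0" by auto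
    define z where "z = (\<lambda>i. z0 n * z0 i)"
    have zS: "z \<in> S" unfolding z_def using lin_sc[OF S z0(1)] .
    have zn: "z n = 1" unfolding z_def using sq_nz[OF z0(2)] .
    have Seq: "S = (\<lambda>(v,c). (\<lambda>i. v i + c * z i)) ` (S0 \<times> UNIV)"
    proof
      show "S \<subseteq> (\<lambda>(v,c). (\<lambda>i. v i + c * z i)) ` (S0 \<times> UNIV)"
      proof
        fix u assume u: "u \<in> S"
        have "(\<lambda>i. u i - u n * z i) \<in> S0" unfolding S0_def
          using lin_diff[OF S u lin_sc[OF S zS]] zn by auto
        then show "u \<in> (\<lambda>(v,c). (\<lambda>i. v i + c * z i)) ` (S0 \<times> UNIV)"
          by (intro rev_image_eqI[of "((\<lambda>i. u i - u n * z i), u n)"]) auto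
      qed
      show "(\<lambda>(v,c). (\<lambda>i. v i + c * z i)) ` (S0 \<times> UNIV) \<subseteq> S"
        using lin_add[OF S] lin_sc[OF S zS] unfolding S0_def by auto
    qed
    have "inj_on (\<lambda>(v,c). (\<lambda>i. v i + c * z i)) (S0 \<times> (UNIV::3 set))"
    proof (rule inj_onI, clarsimp)
      fix v c v' c' assume v: "v \<in> S0" "v' \<in> S0" and e: "(\<lambda>i. v i + c * z i) = (\<lambda>i. v' i + c' * z i)"
      have "c = c'" using fun_cong[OF e, of n] v zn unfolding S0_def by simp
      then show "v = v' \<and> c = c'" using e by (auto simp: fun_eq_iff)
    qed
    then have cS: "card S = 3 * card S0" using Seq by (simp add: card_image card_cartesian_product)
    have "bij_betw (\<lambda>u. u(n:=0)) (dual_code (Suc n) S) (dual_code n S0)"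
    proof (rule bij_betw_byWitness[where f'="\<lambda>w. w(n := - tinner n w z)"])
      show "\<forall>u\<in>dual_code (Suc n) S. (u(n := 0))(n := - tinner n (u(n := 0)) z) = u"
      proof
        fix u assume u: "u \<in> dual_code (Suc n) S"
        then have "tinner (Suc n) u z = 0" using zS unfolding dual_code_def by auto
        then have "u n = - tinner n (u(n := 0)) z" using zn by (simp add: ipart tinner_Suc eq_neg_iff_add_eq_0 add.commute)
        then show "(u(n := 0))(n := - tinner n (u(n := 0)) z) = u" by auto
      qed
      show "\<forall>w\<in>dual_code n S0. (w(n := - tinner n w z))(n := 0) = w"
        using dual_sub[of n S0] unfolding tvecs_def by (auto simp: fun_eq_iff)
      show "(\<lambda>u. u(n:=0)) ` dual_code (Suc n) S \<subseteq> dual_code n S0"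
      proof clarify
        fix u assume u: "u \<in> dual_code (Suc n) S"
        show "u(n:=0) \<in> dual_code n S0" unfolding dual_code_def
        proof (intro CollectI conjI ballI)
          show "u(n:=0) \<in> tvecs n" using u tvecs_Suc_iff unfolding dual_code_def by auto
          fix v assume v: "v \<in> S0"
          have "tinner (Suc n) u v = 0" using u v unfolding dual_code_def S0_def by auto
          then show "tinner n (u(n := 0)) v = 0" using v unfolding S0_def by (simp add: ipart tinner_Suc)
        qed
      qed
      show "(\<lambda>w. w(n := - tinner n w z)) ` dual_code n S0 \<subseteq> dual_code (Suc n) S"
      proof clarify
        fix w assume w: "w \<in> dual_code n S0"
        have wt: "w \<in> tvecs n" using w dual_sub by auto
        show "w(n := - tinner n w z) \<in> dual_code (Suc n) S" unfolding dual_code_def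
        proof (intro CollectI conjI ballI)
          show "w(n := - tinner n w z) \<in> tvecs (Suc n)" using wt unfolding tvecs_def by auto
          fix v assume "v \<in> S"
          then obtain v0 c where v0: "v0 \<in> S0" and ve: "v = (\<lambda>i. v0 i + c * z i)" using Seq by auto
          have "tinner n w v0 = 0" using w v0 unfolding dual_code_def by auto
          moreover have "v0 n = 0" using v0 unfolding S0_def by auto
          ultimately show "tinner (Suc n) (w(n := - tinner n w z)) v = 0"
            unfolding ve by (simp add: ipart tinner_Suc tinner_lin zn algebra_simps)
        qed
      qed
    qed
    then have "card (dual_code (Suc n) S) = card (dual_code n S0)" by (rule bij_betw_same_card)
    then show ?thesis using cS IH by simp
  qed
qed

section \<open>Self-dual codes\<close>

lemma sd_lin: "self_dual n D \<Longrightarrow> linear_code n D" unfolding self_dual_def by auto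
lemma sd_orth: "self_dual n D \<Longrightarrow> x \<in> D \<Longrightarrow> y \<in> D \<Longrightarrow> tinner n x y = 0"
  unfolding self_dual_def dual_code_def by blast

lemma Q_weight: "tinner n v v = of_nat (hweight n v)"
proof -
  have "tinner n v v = (\<Sum>i<n. if v i \<noteq> 0 then 1 else 0)"
    unfolding tinner_def by (rule sum.cong) (auto simp: sq_nz)
  also have "\<dots> = (\<Sum>i\<in>{i\<in>{..<n}. v i \<noteq> 0}. (1::3))" by (rule sum.inter_filter[symmetric]) simp
  also have "\<dots> = of_nat (card {i\<in>{..<n}. v i \<noteq> 0})" by simp
  also have "{i\<in>{..<n}. v i \<noteq> 0} = {i. i < n \<and> v i \<noteq> 0}" by auto
  finally show ?thesis unfolding hweight_def .
qed

lemma type_III_iff: "type_III n D \<longleftrightarrow> self_dual n D"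
  unfolding type_III_def using sd_orth Q_weight of_nat3 by metis

lemma III_eq: "III n = {D. self_dual n D}"
  unfolding III_def using type_III_iff by auto

lemma finite_III: "finite (III n)"
proof -
  have "III n \<subseteq> Pow (tvecs n)" unfolding III_eq self_dual_def linear_code_def by auto
  then show ?thesis using finite_tvecs by (auto intro: finite_subset)
qed

lemma sd_card: "self_dual n D \<Longrightarrow> n = 2 * m \<Longrightarrow> card D = 3 ^ m"
proof -
  assume D: "self_dual n D" and n: "n = 2 * m"
  have "card D * card D = 3 ^ n" using dual_card[OF sd_lin[OF D]] D unfolding self_dual_def by simp
  also have "\<dots> = 3^m * 3^m" unfolding n by (metis mult_2 power_add)
  finally have "(card D)^2 = (3^m)^2" by (simp add: power2_eq_square)
  then show ?thesis by (simp add: power2_eq_iff)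
qed

section \<open>Reflections\<close>

definition rfl3 :: "nat \<Rightarrow> (nat \<Rightarrow> 3) \<Rightarrow> (nat \<Rightarrow> 3) \<Rightarrow> (nat \<Rightarrow> 3)" where
  "rfl3 n r v = (\<lambda>i. v i + (tinner n r r * tinner n v r) * r i)"

lemma three_x: "(x::3) + x + x = 0"
proof -
  have "x + x + x = 3 * x" by (simp add: algebra_simps)
  then show ?thesis by simp
qed

lemma tinner_exp: "tinner n (\<lambda>i. u i + a * r i) (\<lambda>i. v i + b * r i)
   = tinner n u v + b * tinner n u r + a * tinner n r v + a * b * tinner n r r"
  by (simp add: tinner_lin algebra_simps)

lemma refl_tvecs: "r \<in> tvecs n \<Longrightarrow> v \<in> tvecs n \<Longrightarrow> rfl3 n r v \<in> tvecs n"
  unfolding rfl3_def by (intro tvecs_add tvecs_sc) (simp_all add: mult.assoc[symmetric])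

lemma refl_add: "rfl3 n r (\<lambda>i. u i + v i) = (\<lambda>i. rfl3 n r u i + rfl3 n r v i)"
  unfolding rfl3_def by (simp add: tinner_lin algebra_simps)
lemma refl_sc: "rfl3 n r (\<lambda>i. a * u i) = (\<lambda>i. a * rfl3 n r u i)"
  unfolding rfl3_def by (simp add: tinner_lin algebra_simps)
lemma refl_0: "rfl3 n r (\<lambda>i. 0) = (\<lambda>i. 0)"
  unfolding rfl3_def by simp

lemma refl_iso: assumes k: "tinner n r r \<noteq> 0"
  shows "tinner n (rfl3 n r u) (rfl3 n r v) = tinner n u v"
proof -
  define k where "k = tinner n r r"
  have kk: "k * k = 1" using sq_nz k unfolding k_def by auto
  define bu where "bu = tinner n u r"
  define bv where "bv = tinner n v r"
  have ru: "rfl3 n r u = (\<lambda>i. u i + (k*bu) * r i)" unfolding rfl3_def k_def bu_def ..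
  have rv: "rfl3 n r v = (\<lambda>i. v i + (k*bv) * r i)" unfolding rfl3_def k_def bv_def ..
  have "tinner n (rfl3 n r u) (rfl3 n r v) = tinner n u v + (k*bv) * bu + (k*bu) * bv + (k*bu)*(k*bv)*k"
    unfolding ru rv tinner_exp unfolding k_def bu_def bv_def by (simp only: tinner_comm[of n r v])
  also have "(k*bu)*(k*bv)*k = (k*k)*k*bu*bv" by (simp add: algebra_simps)
  also have "tinner n u v + (k*bv) * bu + (k*bu) * bv + (k*k)*k*bu*bv = tinner n u v + ((k*bu*bv) + (k*bu*bv) + (k*bu*bv))"
    using kk by (simp add: algebra_simps)
  also have "\<dots> = tinner n u v" by (simp only: three_x) simp
  finally show ?thesis .
qed

lemma refl_refl: assumes k: "tinner n r r \<noteq> 0"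
  shows "rfl3 n r (rfl3 n r v) = v"
proof -
  define k where "k = tinner n r r"
  have kk: "k * k = 1" using sq_nz k unfolding k_def by auto
  define b where "b = tinner n v r"
  have "tinner n (rfl3 n r v) r = b + k * b * k" unfolding rfl3_def b_def k_def by (simp add: tinner_lin)
  also have "\<dots> = b + b" using kk by (simp add: algebra_simps)
  finally have e: "tinner n (rfl3 n r v) r = b + b" .
  show ?thesis
  proof
    fix i
    have "rfl3 n r (rfl3 n r v) i = v i + (k*b + k*b + k*b) * r i"
      unfolding rfl3_def[of n r "rfl3 n r v"] e unfolding rfl3_def k_def b_def by (simp add: algebra_simps)
    then show "rfl3 n r (rfl3 n r v) i = v i" by (simp only: three_x) simp
  qed
qed

lemma refl_sd: assumes r: "r \<in> tvecs n" "tinner n r r \<noteq> 0" and D: "self_dual n D"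
  shows "self_dual n (rfl3 n r ` D)"
proof -
  note L = sd_lin[OF D]
  have lin: "linear_code n (rfl3 n r ` D)"
    unfolding linear_code_def
  proof (intro conjI ballI allI)
    show "rfl3 n r ` D \<subseteq> tvecs n" using refl_tvecs[OF r(1)] lin_sub[OF L] by auto
    show "(\<lambda>i. 0) \<in> rfl3 n r ` D" using lin_0[OF L] refl_0[of n r] by (metis image_eqI)
    fix u v assume "u \<in> rfl3 n r ` D" "v \<in> rfl3 n r ` D"
    then obtain u' v' where "u' \<in> D" "v' \<in> D" "u = rfl3 n r u'" "v = rfl3 n r v'" by auto
    then have "(\<lambda>i. u i + v i) = rfl3 n r (\<lambda>i. u' i + v' i)" using refl_add by simp
    then show "(\<lambda>i. u i + v i) \<in> rfl3 n r ` D" using lin_add[OF L \<open>u' \<in> D\<close> \<open>v' \<in> D\<close>] by blast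
  next
    fix a u assume "u \<in> rfl3 n r ` D"
    then obtain u' where "u' \<in> D" "u = rfl3 n r u'" by auto
    then have "(\<lambda>i. a * u i) = rfl3 n r (\<lambda>i. a * u' i)" using refl_sc by simp
    then show "(\<lambda>i. a * u i) \<in> rfl3 n r ` D" using lin_sc[OF L \<open>u' \<in> D\<close>] by blast
  qed
  have "rfl3 n r ` D = dual_code n (rfl3 n r ` D)"
  proof
    show "rfl3 n r ` D \<subseteq> dual_code n (rfl3 n r ` D)"
      unfolding dual_code_def using lin_sub[OF lin] refl_iso[OF r(2)] sd_orth[OF D] by auto
    show "dual_code n (rfl3 n r ` D) \<subseteq> rfl3 n r ` D"
    proof
      fix y assume y: "y \<in> dual_code n (rfl3 n r ` D)"
      have yt: "y \<in> tvecs n" using y dual_sub by auto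
      have "rfl3 n r y \<in> dual_code n D" unfolding dual_code_def
      proof (intro CollectI conjI ballI)
        show "rfl3 n r y \<in> tvecs n" using refl_tvecs[OF r(1) yt] .
        fix v assume v: "v \<in> D"
        have "tinner n (rfl3 n r y) v = tinner n (rfl3 n r (rfl3 n r y)) (rfl3 n r v)"
          using refl_iso[OF r(2)] by simp
        also have "\<dots> = tinner n y (rfl3 n r v)" using refl_refl[OF r(2)] by simp
        also have "\<dots> = 0" using y v unfolding dual_code_def by auto
        finally show "tinner n (rfl3 n r y) v = 0" .
      qed
      then have "rfl3 n r y \<in> D" using D unfolding self_dual_def by auto
      moreover have "y = rfl3 n r (rfl3 n r y)" using refl_refl[OF r(2)] by simp
      ultimately show "y \<in> rfl3 n r ` D" by auto
    qed
  qed
  then show ?thesis using lin unfolding self_dual_def by auto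
qed

definition hc :: "nat \<Rightarrow> (nat \<Rightarrow> 3) \<Rightarrow> (nat \<Rightarrow> 3) \<Rightarrow> nat" where
  "hc n x y = card {D \<in> III n. x \<in> D \<and> y \<in> D}"

lemma hc_refl: assumes r: "r \<in> tvecs n" "tinner n r r \<noteq> 0"
  shows "hc n x y = hc n (rfl3 n r x) (rfl3 n r y)"
  unfolding hc_def
proof (rule bij_betw_same_card[where f="\<lambda>D. rfl3 n r ` D"], rule bij_betw_byWitness[where f'="\<lambda>D. rfl3 n r ` D"])
  have inv: "rfl3 n r ` (rfl3 n r ` D) = D" if "self_dual n D" for D
  proof -
    have "rfl3 n r ` (rfl3 n r ` D) = (\<lambda>v. rfl3 n r (rfl3 n r v)) ` D" by (simp add: image_image)
    also have "\<dots> = D" using refl_refl[OF r(2)] by simp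
    finally show ?thesis .
  qed
  show "\<forall>D\<in>{D \<in> III n. x \<in> D \<and> y \<in> D}. rfl3 n r ` rfl3 n r ` D = D"
    using inv unfolding III_eq by auto
  show "\<forall>D\<in>{D \<in> III n. rfl3 n r x \<in> D \<and> rfl3 n r y \<in> D}. rfl3 n r ` rfl3 n r ` D = D"
    using inv unfolding III_eq by auto
  show "(\<lambda>D. rfl3 n r ` D) ` {D \<in> III n. x \<in> D \<and> y \<in> D} \<subseteq> {D \<in> III n. rfl3 n r x \<in> D \<and> rfl3 n r y \<in> D}"
    using refl_sd[OF r] unfolding III_eq by auto
  show "(\<lambda>D. rfl3 n r ` D) ` {D \<in> III n. rfl3 n r x \<in> D \<and> rfl3 n r y \<in> D} \<subseteq> {D \<in> III n. x \<in> D \<and> y \<in> D}"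
  proof clarify
    fix D assume D: "D \<in> III n" "rfl3 n r x \<in> D" "rfl3 n r y \<in> D"
    have "rfl3 n r (rfl3 n r x) \<in> rfl3 n r ` D" "rfl3 n r (rfl3 n r y) \<in> rfl3 n r ` D" using D by auto
    then show "rfl3 n r ` D \<in> III n \<and> x \<in> rfl3 n r ` D \<and> y \<in> rfl3 n r ` D"
      using refl_sd[OF r] D(1) refl_refl[OF r(2)] unfolding III_eq by auto
  qed
qed

lemma F3_mix: assumes "(\<alpha>::3) \<noteq> 0" "\<delta> \<noteq> 0" shows "\<exists>s. \<alpha> + s * \<beta> \<noteq> 0 \<and> \<gamma> + s * \<delta> \<noteq> 0"
proof (rule ccontr)
  assume "\<not> ?thesis"
  then have h: "\<alpha> + s * \<beta> = 0 \<or> \<gamma> + s * \<delta> = 0" for s by auto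
  note h0 = h[of 0] and h1 = h[of 1] and h2 = h[of 2]
  have g: "\<gamma> = 0" using h0 assms by simp
  have e1: "\<alpha> + \<beta> = 0" using h1 g assms by simp
  have "2 * \<delta> \<noteq> 0" using assms(2) F3_cases[of \<delta>] by auto
  then have e2: "\<alpha> + 2 * \<beta> = 0" using h2 g by simp
  have "\<beta> = 0" using e1 e2 by (metis add_diff_cancel_left' diff_self mult_2 add.assoc add_0_right)
  then show False using e1 assms by simp
qed

definition evec :: "nat \<Rightarrow> (nat \<Rightarrow> 3)" where "evec j = (\<lambda>i. if i = j then 1 else 0)"

lemma evec_tvecs: "j < n \<Longrightarrow> evec j \<in> tvecs n" unfolding evec_def tvecs_def by auto

lemma nonzero_coord: assumes "x \<in> tvecs n" "x \<noteq> (\<lambda>i. 0)" shows "\<exists>i<n. x i \<noteq> 0"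
proof (rule ccontr)
  assume "\<not> ?thesis"
  then have "x i = 0" for i using assms(1) unfolding tvecs_def by (cases "i < n") auto
  then show False using assms(2) by auto
qed

lemma C1: assumes "x \<in> tvecs n" "x \<noteq> (\<lambda>i. 0)" shows "\<exists>a\<in>tvecs n. tinner n a x \<noteq> 0"
proof -
  obtain i where i: "i < n" "x i \<noteq> 0" using nonzero_coord[OF assms] by auto
  have "tinner n (evec i) x = x i" using tinner_delta_l[OF i(1), of 1 x] unfolding evec_def by simp
  then show ?thesis using i evec_tvecs[OF i(1)] by (intro bexI[of _ "evec i"]) auto
qed

lemma C2: assumes x: "x \<in> tvecs n" "x \<noteq> (\<lambda>i. 0)" and y: "y \<in> tvecs n" and ns: "\<forall>c. y \<noteq> (\<lambda>i. c * x i)"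
  shows "\<exists>a\<in>tvecs n. tinner n a x = 0 \<and> tinner n a y \<noteq> 0"
proof -
  obtain i where i: "i < n" "x i \<noteq> 0" using nonzero_coord[OF x] by auto
  define y' where "y' = (\<lambda>k. y k - (y i * x i) * x k)"
  have y't: "y' \<in> tvecs n" unfolding y'_def using x y by (intro tvecs_diff tvecs_sc) (simp_all add: mult.assoc[symmetric])
  have y'i: "y' i = 0" unfolding y'_def using sq_nz[OF i(2)] by (simp add: mult.assoc)
  have "y' \<noteq> (\<lambda>i. 0)"
  proof
    assume "y' = (\<lambda>i. 0)"
    have "y = (\<lambda>k. (y i * x i) * x k)"
    proof
      fix k have "y' k = 0" using \<open>y' = (\<lambda>i. 0)\<close> by simp
      then show "y k = (y i * x i) * x k" unfolding y'_def by simp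
    qed
    then show False using ns by blast
  qed
  then obtain j where j: "j < n" "y' j \<noteq> 0" using nonzero_coord[OF y't] by auto
  have ji: "j \<noteq> i" using j y'i by auto
  define a where "a = (\<lambda>k. (if k = j then x i else 0) + (if k = i then - x j else 0))"
  have at: "a \<in> tvecs n" unfolding a_def tvecs_def using i j by auto
  have ax: "tinner n a x = 0"
    unfolding a_def tinner_add_l using tinner_delta_l[OF i(1)] tinner_delta_l[OF j(1)] by (simp add: mult.commute)
  have ay': "tinner n a y' = x i * y' j"
    unfolding a_def tinner_add_l using tinner_delta_l[OF i(1)] tinner_delta_l[OF j(1)] y'i by simp
  have "tinner n a y = tinner n a y'"
    unfolding y'_def tinner_diff_r tinner_sc_r ax by simp
  then have "tinner n a y \<noteq> 0" using ay' i j F3_nzmul by simp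
  then show ?thesis using at ax by auto
qed

lemma C3: assumes "a \<in> tvecs n" "b \<in> tvecs n" "tinner n a p \<noteq> 0" "tinner n b q \<noteq> 0"
  shows "\<exists>s. (\<lambda>i. a i + s * b i) \<in> tvecs n \<and> tinner n (\<lambda>i. a i + s * b i) p \<noteq> 0
     \<and> tinner n (\<lambda>i. a i + s * b i) q \<noteq> 0"
proof -
  obtain s where "tinner n a p + s * tinner n b p \<noteq> 0 \<and> tinner n a q + s * tinner n b q \<noteq> 0"
    using F3_mix[OF assms(3,4)] by blast
  then show ?thesis using assms(1,2) by (intro exI[of _ s]) (auto simp: tinner_lin)
qed

lemma C4: assumes "z \<in> tvecs n" "y \<in> tvecs n" "tinner n y y = 0" "tinner n z y \<noteq> 0"
  shows "(\<lambda>i. z i + (tinner n z z * tinner n z y) * y i) \<in> tvecs n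
    \<and> tinner n (\<lambda>i. z i + (tinner n z z * tinner n z y) * y i) (\<lambda>i. z i + (tinner n z z * tinner n z y) * y i) = 0"
proof
  show "(\<lambda>i. z i + (tinner n z z * tinner n z y) * y i) \<in> tvecs n" using assms by auto
  define q where "q = tinner n z z"
  define b where "b = tinner n z y"
  have bb: "b * b = 1" using sq_nz assms(4) unfolding b_def by auto
  have "tinner n (\<lambda>i. z i + (q * b) * y i) (\<lambda>i. z i + (q * b) * y i) = q + (q*b)*b + (q*b)*b"
    unfolding tinner_exp using assms(3) unfolding q_def b_def by (simp add: tinner_comm[of n y z])
  also have "\<dots> = q + q + q" using bb by (simp add: mult.assoc)
  also have "\<dots> = 0" by (rule three_x)
  finally show "tinner n (\<lambda>i. z i + (tinner n z z * tinner n z y) * y i) (\<lambda>i. z i + (tinner n z z * tinner n z y) * y i) = 0"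
    unfolding q_def b_def .
qed

lemma neg2: "- ((b::3) + b) = b"
proof -
  have "b + b + b = 0" by (rule three_x)
  then show ?thesis by (simp add: add_eq_0_iff2 eq_neg_iff_add_eq_0 add.commute)
qed

lemma refl_move: assumes t: "x \<in> tvecs n" "y \<in> tvecs n" and q: "tinner n x x = 0" "tinner n y y = 0"
  and b: "tinner n x y \<noteq> 0"
  shows "tinner n (\<lambda>i. x i - y i) (\<lambda>i. x i - y i) \<noteq> 0 \<and> rfl3 n (\<lambda>i. x i - y i) x = y"
proof -
  define k where "k = tinner n x y"
  have kk: "k * k = 1" using sq_nz b unfolding k_def by auto
  have "tinner n (\<lambda>i. x i - y i) (\<lambda>i. x i - y i) = (tinner n x x - tinner n x y) - (tinner n y x - tinner n y y)"
    by (simp only: tinner_diff_l tinner_diff_r)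
  also have "\<dots> = - (k + k)" using q unfolding k_def by (simp add: tinner_comm[of n y x])
  also have "\<dots> = k" by (rule neg2)
  finally have Qr: "tinner n (\<lambda>i. x i - y i) (\<lambda>i. x i - y i) = k" .
  have Bx: "tinner n x (\<lambda>i. x i - y i) = - k" using q unfolding k_def by (simp add: tinner_lin)
  have "rfl3 n (\<lambda>i. x i - y i) x = (\<lambda>i. x i + (k * (-k)) * (x i - y i))"
    unfolding rfl3_def Qr Bx ..
  also have "\<dots> = y" using kk by (simp add: fun_eq_iff)
  finally show ?thesis using Qr b unfolding k_def by simp
qed

lemma refl_fix: "tinner n p r = 0 \<Longrightarrow> rfl3 n r p = p"
  unfolding rfl3_def by simp

lemma hc_step1: assumes "p \<in> tvecs n" "q \<in> tvecs n" "tinner n p p = 0" "tinner n q q = 0" "tinner n p q \<noteq> 0"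
  shows "hc n p p = hc n q q"
proof -
  have m: "tinner n (\<lambda>i. p i - q i) (\<lambda>i. p i - q i) \<noteq> 0 \<and> rfl3 n (\<lambda>i. p i - q i) p = q"
    by (rule refl_move[OF assms])
  have "(\<lambda>i. p i - q i) \<in> tvecs n" using assms by auto
  from hc_refl[OF this conjunct1[OF m], of p p] conjunct2[OF m] show ?thesis by simp
qed

lemma hc_step2: assumes "p \<in> tvecs n" "q \<in> tvecs n" "tinner n p p = 0" "tinner n q q = 0" "tinner n p q \<noteq> 0"
  and "tinner n x p = 0" "tinner n x q = 0"
  shows "hc n x p = hc n x q"
proof -
  have m: "tinner n (\<lambda>i. p i - q i) (\<lambda>i. p i - q i) \<noteq> 0 \<and> rfl3 n (\<lambda>i. p i - q i) p = q"
    by (rule refl_move[OF assms(1-5)])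
  have "(\<lambda>i. p i - q i) \<in> tvecs n" using assms by auto
  moreover have "rfl3 n (\<lambda>i. p i - q i) x = x"
    by (rule refl_fix) (simp add: tinner_lin assms(6,7))
  ultimately show ?thesis using hc_refl[of "(\<lambda>i. p i - q i)" n x p] m by simp
qed

lemma hc_T1: assumes x: "x \<in> tvecs n" "x \<noteq> (\<lambda>i. 0)" "tinner n x x = 0"
  and y: "y \<in> tvecs n" "y \<noteq> (\<lambda>i. 0)" "tinner n y y = 0"
  shows "hc n x x = hc n y y"
proof (cases "tinner n x y = 0")
  case False
  then show ?thesis using hc_step1 x y by blast
next
  case True
  obtain a where a: "a \<in> tvecs n" "tinner n a x \<noteq> 0" using C1[OF x(1,2)] by auto
  obtain b where b: "b \<in> tvecs n" "tinner n b y \<noteq> 0" using C1[OF y(1,2)] by auto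
  obtain s where s: "(\<lambda>i. a i + s * b i) \<in> tvecs n" "tinner n (\<lambda>i. a i + s * b i) x \<noteq> 0"
     "tinner n (\<lambda>i. a i + s * b i) y \<noteq> 0" using C3[OF a(1) b(1) a(2) b(2)] by blast
  define z0 where "z0 = (\<lambda>i. a i + s * b i)"
  define t where "t = tinner n z0 z0 * tinner n z0 x"
  define z where "z = (\<lambda>i. z0 i + t * x i)"
  have z: "z \<in> tvecs n" "tinner n z z = 0" using C4[of z0 n x] s x unfolding z_def t_def z0_def by auto
  have "tinner n z x = tinner n z0 x + t * tinner n x x" unfolding z_def by (simp only: tinner_add_l tinner_sc_l)
  then have zx: "tinner n x z \<noteq> 0" using s(2) x(3) unfolding z0_def by (simp add: tinner_comm[of n x z])
  have zy: "tinner n z y \<noteq> 0" using s(3) True unfolding z_def z0_def by (simp add: tinner_lin)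
  have "hc n x x = hc n z z" using hc_step1[OF x(1) z(1) x(3) z(2) zx] .
  also have "\<dots> = hc n y y" using hc_step1[OF z(1) y(1) z(2) y(3) zy] .
  finally show ?thesis .
qed

lemma hc_T2: assumes x: "x \<in> tvecs n" "x \<noteq> (\<lambda>i. 0)" "tinner n x x = 0"
  and y: "y \<in> tvecs n" "tinner n y y = 0" "tinner n x y = 0" "\<forall>c. y \<noteq> (\<lambda>i. c * x i)"
  and y': "y' \<in> tvecs n" "tinner n y' y' = 0" "tinner n x y' = 0" "\<forall>c. y' \<noteq> (\<lambda>i. c * x i)"
  shows "hc n x y = hc n x y'"
proof (cases "tinner n y y' = 0")
  case False
  then show ?thesis using hc_step2 x y y' by blast
next
  case True
  obtain a where a: "a \<in> tvecs n" "tinner n a x = 0" "tinner n a y \<noteq> 0" using C2[OF x(1,2) y(1) y(4)] by auto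
  obtain b where b: "b \<in> tvecs n" "tinner n b x = 0" "tinner n b y' \<noteq> 0" using C2[OF x(1,2) y'(1) y'(4)] by auto
  obtain s where s: "(\<lambda>i. a i + s * b i) \<in> tvecs n" "tinner n (\<lambda>i. a i + s * b i) y \<noteq> 0"
     "tinner n (\<lambda>i. a i + s * b i) y' \<noteq> 0" using C3[OF a(1) b(1) a(3) b(3)] by blast
  define z0 where "z0 = (\<lambda>i. a i + s * b i)"
  have z0x: "tinner n z0 x = 0" unfolding z0_def using a(2) b(2) by (simp add: tinner_lin)
  define t where "t = tinner n z0 z0 * tinner n z0 y"
  define z where "z = (\<lambda>i. z0 i + t * y i)"
  have z: "z \<in> tvecs n" "tinner n z z = 0" using C4[of z0 n y] s y unfolding z_def t_def z0_def by auto
  have zx: "tinner n x z = 0" using z0x y(3) unfolding z_def by (simp add: tinner_lin tinner_comm[of n x z0] tinner_comm[of n x y])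
  have "tinner n z y = tinner n z0 y + t * tinner n y y" unfolding z_def by (simp only: tinner_add_l tinner_sc_l)
  then have yz: "tinner n y z \<noteq> 0" using s(2) y(2) unfolding z0_def by (simp add: tinner_comm[of n y z])
  have zy': "tinner n z y' \<noteq> 0" using s(3) True unfolding z_def z0_def by (simp add: tinner_lin)
  have "hc n x y = hc n x z" using hc_step2[OF y(1) z(1) y(2) z(2) yz y(3) zx] .
  also have "\<dots> = hc n x y'" using hc_step2[OF z(1) y'(1) z(2) y'(2) zy' zx y'(3)] .
  finally show ?thesis .
qed

section \<open>Counting isotropic vectors\<close>

lemma card_split3: "finite S \<Longrightarrow> card S = card {x\<in>S. f x = (0::3)} + card {x\<in>S. f x = 1} + card {x\<in>S. f x = 2}"
proof -
  assume fS: "finite S"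
  have "card S = (\<Sum>x\<in>S. 1)" by simp
  also have "\<dots> = (\<Sum>b\<in>(UNIV::3 set). \<Sum>x\<in>{x \<in> S. f x = b}. 1)"
    by (rule sum.group[symmetric]) (auto simp: fS)
  also have "\<dots> = card {x\<in>S. f x = (0::3)} + card {x\<in>S. f x = 1} + card {x\<in>S. f x = 2}"
    unfolding sum3 by simp
  finally show ?thesis .
qed

lemma trans_card: assumes d: "d \<in> tvecs n" and P: "\<And>y. y \<in> tvecs n \<Longrightarrow> P' (\<lambda>i. y i + d i) = P y"
  shows "card {y\<in>tvecs n. P y} = card {y\<in>tvecs n. P' y}"
proof (rule bij_betw_same_card[where f="\<lambda>y i. y i + d i"], rule bij_betw_byWitness[where f'="\<lambda>y i. y i - d i"])
  show "\<forall>a\<in>{y \<in> tvecs n. P y}. (\<lambda>i. a i + d i - d i) = a" by simp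
  show "\<forall>a'\<in>{y \<in> tvecs n. P' y}. (\<lambda>i. a' i - d i + d i) = a'" by simp
  show "(\<lambda>y i. y i + d i) ` {y \<in> tvecs n. P y} \<subseteq> {y \<in> tvecs n. P' y}" using P d by auto
  show "(\<lambda>y i. y i - d i) ` {y \<in> tvecs n. P' y} \<subseteq> {y \<in> tvecs n. P y}"
  proof clarify
    fix y assume y: "y \<in> tvecs n" "P' y"
    have "(\<lambda>i. y i - d i) \<in> tvecs n" using y d by auto
    moreover have "P' (\<lambda>i. (y i - d i) + d i)" using y by simp
    ultimately show "(\<lambda>i. y i - d i) \<in> tvecs n \<and> P (\<lambda>i. y i - d i)" using P by blast
  qed
qed

definition NQ :: "nat \<Rightarrow> 3 \<Rightarrow> nat" where "NQ n c = card {v\<in>tvecs n. tinner n v v = c}"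

lemma NQ_Suc: "NQ (Suc n) c = NQ n c + NQ n (c - 1) + NQ n (c - 1)"
proof -
  define B where "B = (\<lambda>s::3. {w\<in>tvecs n. tinner n w w = c - s * s})"
  have Qext: "tinner (Suc n) (w(n:=s)) (w(n:=s)) = tinner n w w + s * s" for w s
  proof -
    have "tinner n (w(n:=s)) (w(n:=s)) = tinner n w (w(n:=s))" by (rule tinner_cong) auto
    also have "\<dots> = tinner n w w" by (subst tinner_comm, subst tinner_comm, rule tinner_cong) auto
    finally show ?thesis by (simp add: tinner_Suc tinner_comm)
  qed
  have eq: "{v\<in>tvecs (Suc n). tinner (Suc n) v v = c} = (\<lambda>(s,w). w(n:=s)) ` (SIGMA s:UNIV. B s)"
  proof
    show "{v\<in>tvecs (Suc n). tinner (Suc n) v v = c} \<subseteq> (\<lambda>(s,w). w(n:=s)) ` (SIGMA s:UNIV. B s)"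
    proof clarify
      fix v assume v: "v \<in> tvecs (Suc n)" "c = tinner (Suc n) v v"
      have "v = (v(n:=0))(n := v n)" by simp
      then have "tinner (Suc n) v v = tinner n (v(n:=0)) (v(n:=0)) + v n * v n" using Qext by metis
      then have "v(n:=0) \<in> B (v n)" unfolding B_def using v tvecs_Suc_iff by auto
      then show "v \<in> (\<lambda>(s,w). w(n:=s)) ` (SIGMA s:UNIV. B s)"
        by (intro rev_image_eqI[of "(v n, v(n:=0))"]) auto
    qed
    show "(\<lambda>(s,w). w(n:=s)) ` (SIGMA s:UNIV. B s) \<subseteq> {v\<in>tvecs (Suc n). tinner (Suc n) v v = c}"
      unfolding B_def using Qext by (auto simp: tvecs_def)
  qed
  have inj: "inj_on (\<lambda>(s,w). w(n:=s)) (SIGMA s:UNIV. B s)"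
  proof -
    have "inj_on (\<lambda>(w,s). w(n:=s)) (tvecs n \<times> (UNIV::3 set))" by (rule ext_inj)
    then show ?thesis unfolding inj_on_def B_def by auto
  qed
  have "NQ (Suc n) c = card (SIGMA s:UNIV. B s)" unfolding NQ_def eq by (rule card_image[OF inj])
  also have "\<dots> = (\<Sum>s\<in>UNIV. card (B s))"
    by (rule card_SigmaI) (auto simp: B_def finite_tvecs)
  also have "\<dots> = NQ n c + NQ n (c - 1) + NQ n (c - 1)" unfolding sum3 B_def NQ_def by (simp add: four3)
  finally show ?thesis .
qed

lemma NQ_sum: "NQ n 0 + NQ n 1 + NQ n 2 = 3 ^ n"
  using card_split3[OF finite_tvecs, of n "\<lambda>v. tinner n v v"] card_tvecs[of n] unfolding NQ_def by simp

lemma NQ_two: "NQ (Suc (Suc n)) 0 + 3 * NQ n 0 = 4 * 3 ^ n"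
proof -
  have "NQ (Suc (Suc n)) 0 = NQ (Suc n) 0 + NQ (Suc n) 2 + NQ (Suc n) 2" using NQ_Suc[of "Suc n" 0] by (simp add: m1_3)
  also have "\<dots> = NQ n 0 + 4 * (NQ n 1 + NQ n 2)" using NQ_Suc[of n 0] NQ_Suc[of n 2] by (simp add: m1_3)
  finally show ?thesis using NQ_sum[of n] by simp
qed

lemma NQ_0: "NQ 0 0 = 1"
proof -
  have "tvecs 0 = {\<lambda>i. 0}" unfolding tvecs_def by auto
  then show ?thesis unfolding NQ_def by (simp add: tinner_def)
qed

lemma NQ_4k: "3 * int (NQ (4 * k) 0) = 3 ^ (4 * k) + 2 * 3 ^ (2 * k)"
proof (induction k)
  case 0 then show ?case using NQ_0 by simp
next
  case (Suc k)
  have a0: "NQ (4*k+2) 0 + 3 * NQ (4*k) 0 = 4 * 3 ^ (4*k)"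
    unfolding add_2_eq_Suc' by (rule NQ_two)
  have e4: "4*k+4 = Suc (Suc (4*k+2))" by simp
  have b0: "NQ (4*k+4) 0 + 3 * NQ (4*k+2) 0 = 4 * 3 ^ (4*k+2)"
    unfolding e4 by (rule NQ_two)
  have a: "int (NQ (4*k+2) 0) + 3 * int (NQ (4*k) 0) = 4 * 3 ^ (4*k)"
    using arg_cong[OF a0, of int] by simp
  have b: "int (NQ (4*k+4) 0) + 3 * int (NQ (4*k+2) 0) = 4 * 3 ^ (4*k+2)"
    using arg_cong[OF b0, of int] by simp
  have "3 * int (NQ (4*k+4) 0) = 81 * 3^(4*k) + 18 * 3^(2*k)"
    using a b Suc.IH by (simp add: power_add)
  then show ?case by (simp add: power_add algebra_simps)
qed

lemma iso_perp_count: assumes x: "x \<in> tvecs n" "x \<noteq> (\<lambda>i. 0)" "tinner n x x = 0"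
  shows "9 * card {y\<in>tvecs n. tinner n x y = 0 \<and> tinner n y y = 0} + 2 * 3 ^ n = 9 * NQ n 0"
proof -
  obtain i where i: "i < n" "x i \<noteq> 0" using nonzero_coord[OF x(1,2)] by auto
  define w where "w = (\<lambda>k. if k = i then x i else 0)"
  have wt: "w \<in> tvecs n" unfolding w_def tvecs_def using i by auto
  have wx: "tinner n x w = 1" unfolding w_def using tinner_delta_l[OF i(1), of "x i" x] sq_nz[OF i(2)]
    by (simp add: tinner_comm[of n x])
  define G where "G = (\<lambda>b. card {y\<in>tvecs n. tinner n x y = b})"
  define F where "F = (\<lambda>b c. card {y\<in>tvecs n. tinner n x y = b \<and> tinner n y y = c})"
  have G0: "G 0 = G b" for b
    unfolding G_def
  proof (rule trans_card[where d="\<lambda>k. b * w k"])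
    show "(\<lambda>k. b * w k) \<in> tvecs n" using wt by auto
    fix y assume "y \<in> tvecs n"
    show "(tinner n x (\<lambda>i. y i + b * w i) = b) = (tinner n x y = 0)"
      by (simp add: tinner_lin wx)
  qed
  have "3 ^ n = G 0 + G 1 + G 2"
    using card_split3[OF finite_tvecs, of n "tinner n x"] card_tvecs[of n] unfolding G_def by simp
  then have G3: "3 ^ n = 3 * G b" for b using G0[of 1] G0[of 2] G0[of b] by simp
  have Fb: "F b 0 = F b c" if b: "b \<noteq> 0" for b c
    unfolding F_def
  proof (rule trans_card[where d="\<lambda>k. (2 * c * b) * x k"])
    show "(\<lambda>k. (2 * c * b) * x k) \<in> tvecs n" using x by auto
    fix y assume "y \<in> tvecs n"
    have e1: "tinner n x (\<lambda>i. y i + 2 * c * b * x i) = tinner n x y"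
      using x(3) by (simp add: tinner_lin)
    have e2: "tinner n (\<lambda>i. y i + 2 * c * b * x i) (\<lambda>i. y i + 2 * c * b * x i)
       = tinner n y y + (2 * c * b) * tinner n x y + (2 * c * b) * tinner n x y"
      unfolding tinner_exp using x(3) by (simp add: tinner_comm[of n x y])
    have bb: "b * b = 1" using sq_nz[OF b] .
    have e3: "(2 * c * b) * b + (2 * c * b) * b = c"
    proof -
      have "(2 * c * b) * b + (2 * c * b) * b = 4 * c * (b * b)" by (simp add: algebra_simps)
      also have "\<dots> = c" using bb four3 by simp
      finally show ?thesis .
    qed
    show "(tinner n x (\<lambda>i. y i + 2 * c * b * x i) = b \<and>
          tinner n (\<lambda>i. y i + 2 * c * b * x i) (\<lambda>i. y i + 2 * c * b * x i) = c) =
         (tinner n x y = b \<and> tinner n y y = 0)"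
      unfolding e1 e2
    proof (cases "tinner n x y = b")
      case True
      have "tinner n y y + 2 * c * b * tinner n x y + 2 * c * b * tinner n x y = tinner n y y + c"
        unfolding True using e3 by (simp add: add.assoc)
      then show "(tinner n x y = b \<and> tinner n y y + 2 * c * b * tinner n x y + 2 * c * b * tinner n x y = c) =
        (tinner n x y = b \<and> tinner n y y = 0)" using True by simp
    qed simp
  qed
  have GF: "G b = 3 * F b 0" if "b \<noteq> 0" for b
  proof -
    have "G b = F b 0 + F b 1 + F b 2"
      using card_split3[of "{y\<in>tvecs n. tinner n x y = b}" "\<lambda>y. tinner n y y"] finite_tvecs[of n]
      unfolding G_def F_def by (simp add: conj_assoc)
    then show ?thesis using Fb[OF that, of 1] Fb[OF that, of 2] by simp
  qed
  have e: "\<And>b. {z \<in> {y\<in>tvecs n. tinner n y y = 0}. tinner n x z = b} = {y\<in>tvecs n. tinner n x y = b \<and> tinner n y y = 0}"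
    by auto
  have N: "NQ n 0 = F 0 0 + F 1 0 + F 2 0"
    using card_split3[of "{y\<in>tvecs n. tinner n y y = 0}" "tinner n x"] finite_tvecs[of n]
    unfolding NQ_def F_def e by simp
  have "3^n = 9 * F 1 0" "3^n = 9 * F 2 0" using G3[of 1] G3[of 2] GF[of 1] GF[of 2] by simp_all
  then show ?thesis using N unfolding F_def by simp
qed

section \<open>Double counting\<close>

lemma card_filter_sum: "finite A \<Longrightarrow> card {a\<in>A. P a} = (\<Sum>a\<in>A. if P a then 1 else 0)"
  by (simp add: sum.inter_filter[symmetric])

lemma swap_count: "finite A \<Longrightarrow> finite X \<Longrightarrow>
   (\<Sum>D\<in>A. card {x\<in>X. P x D}) = (\<Sum>x\<in>X. card {D\<in>A. P x D})"
  by (simp add: card_filter_sum sum.swap[of _ A X])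

lemma sd_facts: assumes "D \<in> III n"
  shows "self_dual n D" "D \<subseteq> tvecs n" "(\<lambda>i. 0) \<in> D" "\<And>x. x \<in> D \<Longrightarrow> tinner n x x = 0"
    "\<And>x y. x \<in> D \<Longrightarrow> y \<in> D \<Longrightarrow> tinner n x y = 0"
  using assms unfolding III_eq apply simp_all
  using lin_sub sd_lin apply blast
  using lin_0 sd_lin apply blast
  using sd_orth apply blast
  using sd_orth apply blast
  done

lemma two_mem: "linear_code n D \<Longrightarrow> ((\<lambda>i. 2 * x i) \<in> D) = (x \<in> D)"
proof
  assume L: "linear_code n D"
  show "x \<in> D \<Longrightarrow> (\<lambda>i. 2 * x i) \<in> D" using lin_sc[OF L] by blast
  assume "(\<lambda>i. 2 * x i) \<in> D"
  then have "(\<lambda>i. 2 * (2 * x i)) \<in> D" using lin_sc[OF L] by blast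
  moreover have "(\<lambda>i. 2 * (2 * x i)) = x" by (simp add: mult.assoc[symmetric] four3[unfolded numeral_times_numeral] fun_eq_iff)
  ultimately show "x \<in> D" by simp
qed

lemma span3: assumes "x \<noteq> (\<lambda>i. 0)"
  shows "(\<exists>c. y = (\<lambda>i. c * x i)) = (y \<in> {(\<lambda>i. 0), x, (\<lambda>i. 2 * x i)})"
    and "card {(\<lambda>i. 0::3), x, (\<lambda>i. 2 * x i)} = 3"
proof -
  show "(\<exists>c. y = (\<lambda>i. c * x i)) = (y \<in> {(\<lambda>i. 0), x, (\<lambda>i. 2 * x i)})"
  proof
    assume "\<exists>c. y = (\<lambda>i. c * x i)"
    then obtain c where "y = (\<lambda>i. c * x i)" by auto
    then show "y \<in> {(\<lambda>i. 0), x, (\<lambda>i. 2 * x i)}" using F3_cases[of c] by auto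
  next
    assume "y \<in> {(\<lambda>i. 0), x, (\<lambda>i. 2 * x i)}"
    then have "y = (\<lambda>i. 0 * x i) \<or> y = (\<lambda>i. 1 * x i) \<or> y = (\<lambda>i. 2 * x i)" by auto
    then show "\<exists>c. y = (\<lambda>i. c * x i)" by blast
  qed
  obtain j where j: "x j \<noteq> 0" using assms by auto
  have a: "x \<noteq> (\<lambda>i. 0)" using j by auto
  have "2 * x j \<noteq> 0" using j F3_cases[of "x j"] by auto
  then have b: "(\<lambda>i. 2 * x i) \<noteq> (\<lambda>i. 0)" by (auto dest!: fun_cong[where x=j])
  have c: "(\<lambda>i. 2 * x i) \<noteq> x" using j F3_cases[of "x j"] by (auto simp: fun_eq_iff)
  show "card {(\<lambda>i. 0::3), x, (\<lambda>i. 2 * x i)} = 3" using a b c by auto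
qed

lemma span3': "(x::nat\<Rightarrow>3) \<noteq> (\<lambda>i. 0) \<Longrightarrow> (\<forall>c. y \<noteq> (\<lambda>i. c * x i)) = (y \<notin> {(\<lambda>i. 0), x, (\<lambda>i. 2 * x i)})"
  using span3(1)[of x y] by blast

definition Yset :: "nat \<Rightarrow> (nat \<Rightarrow> 3) \<Rightarrow> (nat \<Rightarrow> 3) set" where
  "Yset n x = {y\<in>tvecs n. tinner n x y = 0 \<and> tinner n y y = 0 \<and> (\<forall>c. y \<noteq> (\<lambda>i. c * x i))}"

lemma Yset_card: assumes x: "x \<in> tvecs n" "x \<noteq> (\<lambda>i. 0)" "tinner n x x = 0"
  shows "card (Yset n x) + 3 = card {y\<in>tvecs n. tinner n x y = 0 \<and> tinner n y y = 0}"
proof -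
  define P where "P = {y\<in>tvecs n. tinner n x y = 0 \<and> tinner n y y = 0}"
  define S where "S = {(\<lambda>i. 0::3), x, (\<lambda>i. 2 * x i)}"
  have SP: "S \<subseteq> P" unfolding S_def P_def using x by (auto simp: tinner_lin)
  have "Yset n x = P - S" unfolding Yset_def P_def S_def using span3(1)[OF x(2)] by auto
  moreover have "finite P" unfolding P_def using finite_tvecs by auto
  ultimately have "card (Yset n x) = card P - card S" using SP by (simp add: card_Diff_subset finite_subset)
  moreover have "card S \<le> card P" using SP \<open>finite P\<close> by (simp add: card_mono)
  ultimately show ?thesis using span3(2)[OF x(2)] unfolding S_def P_def by simp
qed

lemma D2: assumes x: "x \<in> tvecs n" "x \<noteq> (\<lambda>i. 0)" "tinner n x x = 0" and n: "n = 2 * m"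
  and y0: "y0 \<in> Yset n x"
  shows "hc n x x * (3 ^ m - 3) = card (Yset n x) * hc n x y0"
proof -
  define A where "A = {D\<in>III n. x \<in> D}"
  have fA: "finite A" unfolding A_def using finite_III by auto
  have fY: "finite (Yset n x)" unfolding Yset_def using finite_tvecs by auto
  have sw: "(\<Sum>D\<in>A. card {y\<in>Yset n x. y \<in> D}) = (\<Sum>y\<in>Yset n x. card {D\<in>A. y \<in> D})"
    by (rule swap_count[OF fA fY])
  have r: "card {D\<in>A. y \<in> D} = hc n x y0" if y: "y \<in> Yset n x" for y
  proof -
    have "card {D\<in>A. y \<in> D} = hc n x y" unfolding A_def hc_def by (simp add: conj_assoc)
    also have "\<dots> = hc n x y0" using y y0 unfolding Yset_def by (intro hc_T2[OF x]) auto
    finally show ?thesis .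
  qed
  have l: "card {y\<in>Yset n x. y \<in> D} = 3 ^ m - 3" if D: "D \<in> A" for D
  proof -
    have D3: "D \<in> III n" "x \<in> D" using D unfolding A_def by auto
    note F = sd_facts[OF D3(1)]
    define S where "S = {(\<lambda>i. 0::3), x, (\<lambda>i. 2 * x i)}"
    have SD: "S \<subseteq> D" unfolding S_def using F(3) D3(2) two_mem[OF sd_lin[OF F(1)]] by auto
    have "{y\<in>Yset n x. y \<in> D} = D - S"
      unfolding Yset_def S_def span3'[OF x(2)] using F(2) F(4) F(5)[OF D3(2)] by auto
    moreover have "finite D" using F(2) finite_tvecs finite_subset by blast
    ultimately show ?thesis using SD span3(2)[OF x(2)] sd_card[OF F(1) n] unfolding S_def
      by (simp add: card_Diff_subset)
  qed
  have "(\<Sum>D\<in>A. card {y\<in>Yset n x. y \<in> D}) = card A * (3 ^ m - 3)" using l by simp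
  moreover have "(\<Sum>y\<in>Yset n x. card {D\<in>A. y \<in> D}) = card (Yset n x) * hc n x y0" using r by simp
  moreover have "card A = hc n x x" unfolding A_def hc_def by simp
  ultimately show ?thesis using sw by simp
qed

lemma D1: assumes x: "x \<in> tvecs n" "x \<noteq> (\<lambda>i. 0)" "tinner n x x = 0" and n: "n = 2 * m"
  shows "card (III n) * (3 ^ m - 1) = (NQ n 0 - 1) * hc n x x"
proof -
  define I where "I = {y\<in>tvecs n. tinner n y y = 0} - {(\<lambda>i. 0)}"
  have fI: "finite I" unfolding I_def using finite_tvecs by auto
  have sw: "(\<Sum>D\<in>III n. card {y\<in>I. y \<in> D}) = (\<Sum>y\<in>I. card {D\<in>III n. y \<in> D})"
    by (rule swap_count[OF finite_III fI])
  have r: "card {D\<in>III n. y \<in> D} = hc n x x" if y: "y \<in> I" for y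
  proof -
    have "card {D\<in>III n. y \<in> D} = hc n y y" unfolding hc_def by simp
    also have "\<dots> = hc n x x" using y unfolding I_def by (intro hc_T1[OF x, symmetric]) auto
    finally show ?thesis .
  qed
  have l: "card {y\<in>I. y \<in> D} = 3 ^ m - 1" if D: "D \<in> III n" for D
  proof -
    note F = sd_facts[OF D]
    have "{y\<in>I. y \<in> D} = D - {(\<lambda>i. 0)}" unfolding I_def using F(2) F(4) by auto
    moreover have "finite D" using F(2) finite_tvecs finite_subset by blast
    ultimately show ?thesis using F(3) sd_card[OF F(1) n] by simp
  qed
  have cI: "card I = NQ n 0 - 1" unfolding I_def NQ_def by (simp add: card_Diff_singleton finite_tvecs)
  show ?thesis using sw l r cI by simp
qed

lemma hc_0l: "hc n (\<lambda>i. 0) y = hc n y y"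
  unfolding hc_def by (rule arg_cong[where f=card]) (auto dest: sd_facts(3))
lemma hc_0r: "hc n x (\<lambda>i. 0) = hc n x x"
  unfolding hc_def by (rule arg_cong[where f=card]) (auto dest: sd_facts(3))
lemma hc_2: "hc n x (\<lambda>i. 2 * x i) = hc n x x"
proof -
  have "{D\<in>III n. x \<in> D \<and> (\<lambda>i. 2 * x i) \<in> D} = {D\<in>III n. x \<in> D \<and> x \<in> D}"
  proof (rule Collect_cong)
    fix D show "(D \<in> III n \<and> x \<in> D \<and> (\<lambda>i. 2 * x i) \<in> D) = (D \<in> III n \<and> x \<in> D \<and> x \<in> D)"
      using two_mem[OF sd_lin[OF sd_facts(1)], of D n x] by blast
  qed
  then show ?thesis unfolding hc_def by simp
qed
lemma hc_00: "hc n (\<lambda>i. 0) (\<lambda>i. 0) = card (III n)"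
  unfolding hc_def by (rule arg_cong[where f=card]) (auto dest: sd_facts(3))

lemma S1_eq: assumes "C \<subseteq> tvecs n"
  shows "(\<Sum>D\<in>III n. card (C \<inter> D)) = (\<Sum>x\<in>C. hc n x x)"
proof -
  have fC: "finite C" using assms finite_tvecs finite_subset by blast
  have "(\<Sum>D\<in>III n. card (C \<inter> D)) = (\<Sum>D\<in>III n. card {x\<in>C. x \<in> D})"
    by (rule sum.cong) (auto intro: arg_cong[where f=card])
  also have "\<dots> = (\<Sum>x\<in>C. card {D\<in>III n. x \<in> D})" by (rule swap_count[OF finite_III fC])
  also have "\<dots> = (\<Sum>x\<in>C. hc n x x)" unfolding hc_def by simp
  finally show ?thesis .
qed

lemma S2_eq: assumes "C \<subseteq> tvecs n"
  shows "(\<Sum>D\<in>III n. card (C \<inter> D) ^ 2) = (\<Sum>x\<in>C. \<Sum>y\<in>C. hc n x y)"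
proof -
  have fC: "finite C" using assms finite_tvecs finite_subset by blast
  have fCC: "finite (C \<times> C)" using fC by simp
  have "(\<Sum>D\<in>III n. card (C \<inter> D) ^ 2) = (\<Sum>D\<in>III n. card {p\<in>C \<times> C. fst p \<in> D \<and> snd p \<in> D})"
  proof (rule sum.cong)
    fix D
    have "{p\<in>C \<times> C. fst p \<in> D \<and> snd p \<in> D} = (C \<inter> D) \<times> (C \<inter> D)" by auto
    then show "card (C \<inter> D) ^ 2 = card {p\<in>C \<times> C. fst p \<in> D \<and> snd p \<in> D}"
      by (simp add: card_cartesian_product power2_eq_square)
  qed simp
  also have "\<dots> = (\<Sum>p\<in>C \<times> C. card {D\<in>III n. fst p \<in> D \<and> snd p \<in> D})" by (rule swap_count[OF finite_III fCC])
  also have "\<dots> = (\<Sum>p\<in>C \<times> C. hc n (fst p) (snd p))" unfolding hc_def by simp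
  also have "\<dots> = (\<Sum>x\<in>C. \<Sum>y\<in>C. hc n x y)" by (simp add: sum.cartesian_product split_def)
  finally show ?thesis .
qed

lemma row_sum: assumes C: "C \<in> III n" and n: "n = 2 * m" and m: "2 \<le> m" and x: "x \<in> C" "x \<noteq> (\<lambda>i. 0)"
  shows "(\<Sum>y\<in>C. hc n x y) * card (Yset n x) = hc n x x * (3 * card (Yset n x) + (3^m - 3) * (3^m - 3))"
proof -
  note F = sd_facts[OF C]
  have xt: "x \<in> tvecs n" using F(2) x by auto
  have xq: "tinner n x x = 0" using F(4) x by auto
  have fC: "finite C" using F(2) finite_tvecs finite_subset by blast
  have cC: "card C = 3 ^ m" using sd_card[OF F(1) n] .
  define S where "S = {(\<lambda>i. 0::3), x, (\<lambda>i. 2 * x i)}"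
  have SC: "S \<subseteq> C" unfolding S_def using F(3) x two_mem[OF sd_lin[OF F(1)]] by auto
  have cS: "card S = 3" unfolding S_def using span3(2)[OF x(2)] .
  have q9: "(9::nat) \<le> 3 ^ m" using power_increasing[OF m, of "3::nat"] by simp
  have cR: "card (C - S) = 3 ^ m - 3" using SC cS cC fC by (simp add: card_Diff_subset finite_subset)
  have "C - S \<noteq> {}"
  proof
    assume e: "C - S = {}" have "card (C - S) = 0" unfolding e by simp
    with cR q9 show False by simp
  qed
  then obtain y0 where y0: "y0 \<in> C - S" by auto
  have CY: "C - S \<subseteq> Yset n x"
    unfolding Yset_def span3'[OF x(2)] S_def[symmetric] using F(2) F(4) F(5)[OF x(1)] by auto
  have "(\<Sum>y\<in>C. hc n x y) = (\<Sum>y\<in>C - S. hc n x y) + (\<Sum>y\<in>S. hc n x y)"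
    by (rule sum.subset_diff[OF SC fC])
  also have "(\<Sum>y\<in>S. hc n x y) = 3 * hc n x x"
  proof -
    have "(\<Sum>y\<in>S. hc n x y) = (\<Sum>y\<in>S. hc n x x)"
      unfolding S_def by (rule sum.cong) (auto simp: hc_0r hc_2)
    then show ?thesis using cS by simp
  qed
  also have "(\<Sum>y\<in>C - S. hc n x y) = (\<Sum>y\<in>C - S. hc n x y0)"
  proof (rule sum.cong)
    fix y assume "y \<in> C - S"
    then have "y \<in> Yset n x" "y0 \<in> Yset n x" using CY y0 by auto
    then show "hc n x y = hc n x y0" unfolding Yset_def by (intro hc_T2[OF xt x(2) xq]) auto
  qed simp
  also have "\<dots> = (3^m - 3) * hc n x y0" using cR by simp
  finally have e: "(\<Sum>y\<in>C. hc n x y) = (3^m - 3) * hc n x y0 + 3 * hc n x x" .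
  have d2: "hc n x x * (3 ^ m - 3) = card (Yset n x) * hc n x y0"
    using D2[OF xt x(2) xq n] y0 CY by auto
  have "(\<Sum>y\<in>C. hc n x y) * card (Yset n x) = (3^m - 3) * (card (Yset n x) * hc n x y0) + 3 * hc n x x * card (Yset n x)"
    unfolding e by (simp add: algebra_simps)
  also have "\<dots> = hc n x x * (3 * card (Yset n x) + (3^m - 3) * (3^m - 3))"
    unfolding d2[symmetric] by (simp add: algebra_simps)
  finally show ?thesis .
qed

lemma final_alg:
  fixes N f Y q a :: real
  assumes h1: "N * (q - 1) = (a - 1) * f" and h2: "3 * a = q^2 + 2 * q" and h3: "9 * (Y + 3) + 2 * q^2 = 9 * a"
    and q: "q \<ge> 9" and N: "N > 0"
  shows "(N + (q - 1) * f) / N = 4 - 4 / (q / 3 + 1)"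
    and "(N + (q - 1) * f + (q - 1) * (f * (3 * Y + (q - 3)^2) / Y)) / N = 40 * q^2 / ((q + 3) * (q + 9))"
proof -
  have a: "a - 1 = (q + 3) * (q - 1) / 3" using h2 by (simp add: field_simps power2_eq_square)
  have "N * (q - 1) = ((q + 3) * f / 3) * (q - 1)" using h1 unfolding a by (simp add: field_simps)
  then have "N = (q + 3) * f / 3" using q by simp
  then have hf: "f = 3 * N / (q + 3)" using q by (simp add: field_simps)
  have hY: "Y = (q + 9) * (q - 3) / 9" using h3 h2 by (simp add: field_simps power2_eq_square)
  have Yp: "Y > 0" unfolding hY using q by simp
  have n1: "3 * Y + (q - 3)^2 = (q - 3) * (4 * q) / 3"
    unfolding hY by (simp add: field_simps power2_eq_square)
  have R: "(3 * Y + (q - 3)^2) / Y = 12 * q / (q + 9)"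
  proof -
    have "(3 * Y + (q - 3)^2) * (q + 9) = (12 * q) * Y" unfolding hY power2_eq_square by (simp add: field_simps; simp add: algebra_simps)
    then show ?thesis using Yp q by (simp add: frac_eq_eq)
  qed
  have t1: "4 - 4 / (q / 3 + 1) = 4 * q / (q + 3)" using q by (simp add: field_simps)
  have "N + (q - 1) * f = N * (4 * q / (q + 3))" unfolding hf using q by (simp add: field_simps; simp add: algebra_simps)
  then show "(N + (q - 1) * f) / N = 4 - 4 / (q / 3 + 1)" unfolding t1 using N by simp
  have "(N + (q - 1) * f + (q - 1) * (f * (3 * Y + (q - 3)^2) / Y))
     = N + (q - 1) * f + (q - 1) * (f * ((3 * Y + (q - 3)^2) / Y))" by simp
  also have "\<dots> = N + (q - 1) * (3 * N / (q + 3)) + (q - 1) * ((3 * N / (q + 3)) * (12 * q / (q + 9)))"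
    unfolding R hf ..
  also have "\<dots> = N * (40 * q^2 / ((q + 3) * (q + 9)))"
  proof -
    have P: "(q + 3) * (q + 9) \<noteq> 0" using q by simp
    define u where "u = 3 * N / (q + 3)"
    define v where "v = 12 * q / (q + 9)"
    have hu: "(q + 3) * u = 3 * N" unfolding u_def using q by simp
    have hv: "(q + 9) * v = 12 * q" unfolding v_def using q by simp
    have "(N + (q - 1) * u + (q - 1) * (u * v)) * ((q + 3) * (q + 9))
       = N * (q + 3) * (q + 9) + (q - 1) * ((q + 3) * u) * (q + 9) + (q - 1) * ((q + 3) * u) * ((q + 9) * v)"
      by (simp add: algebra_simps)
    also have "\<dots> = N * (40 * q^2)" unfolding hu hv by (simp add: algebra_simps power2_eq_square)
    finally have "(N + (q - 1) * (3 * N / (q + 3)) + (q - 1) * ((3 * N / (q + 3)) * (12 * q / (q + 9)))) * ((q + 3) * (q + 9))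
       = N * (40 * q^2)" unfolding u_def v_def .
    then show ?thesis using P by (simp add: eq_divide_eq)
  qed
  finally show "(N + (q - 1) * f + (q - 1) * (f * (3 * Y + (q - 3)^2) / Y)) / N = 40 * q^2 / ((q + 3) * (q + 9))"
    using N by simp
qed

theorem theorem5p5:
  fixes n :: nat and C :: "(nat \<Rightarrow> 3) set"
  assumes "n mod 4 = 0" and "type_III n C"
  shows "((\<Sum>D\<in>III n. real (card (C \<inter> D))) / real (card (III n))
           = 4 - 4 / ((3::real) powi (int (n div 2) - 1) + 1))
         \<and> ((\<Sum>D\<in>III n. real (card (C \<inter> D)) ^ 2) / real (card (III n))
           = 40 * ((3::real) ^ (n div 2))^2 / (((3::real) ^ (n div 2) + 3) * ((3::real) ^ (n div 2) + 9)))"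
proof -
  obtain k where n4: "n = 4 * k" using assms(1) by auto
  define m where "m = n div 2"
  have nm: "n = 2 * m" and mk: "m = 2 * k" unfolding m_def n4 by auto
  have C: "C \<in> III n" using assms(2) unfolding III_def by auto
  note F = sd_facts[OF C]
  define N where "N = card (III n)"
  have Npos: "N > 0" unfolding N_def using C finite_III card_gt_0_iff by blast
  have s1: "(\<Sum>D\<in>III n. real (card (C \<inter> D))) = real (\<Sum>x\<in>C. hc n x x)"
    unfolding S1_eq[OF F(2), symmetric] by simp
  have s2: "(\<Sum>D\<in>III n. real (card (C \<inter> D)) ^ 2) = real (\<Sum>x\<in>C. \<Sum>y\<in>C. hc n x y)"
    unfolding S2_eq[OF F(2), symmetric] by simp
  have fC: "finite C" using F(2) finite_tvecs finite_subset by blast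
  have cC: "card C = 3 ^ m" using sd_card[OF F(1) nm] .
  show ?thesis
  proof (cases "k = 0")
    case True
    then have n0: "n = 0" "m = 0" using n4 mk by auto
    have "tvecs 0 = {\<lambda>i. 0}" unfolding tvecs_def by auto
    then have C0: "C = {\<lambda>i. 0}" using F(2) F(3) n0 by auto
    have a: "(\<Sum>x\<in>C. hc n x x) = N" unfolding C0 N_def by (simp add: hc_00)
    have b: "(\<Sum>x\<in>C. \<Sum>y\<in>C. hc n x y) = N" unfolding C0 N_def by (simp add: hc_00)
    have p: "(3::real) powi (int 0 - 1) = 1/3" by (simp add: power_int_minus)
    show ?thesis unfolding s1 s2 a b N_def[symmetric] m_def[symmetric] n0(2) p using Npos by simp
  next
    case False
    then have m2: "2 \<le> m" using mk by simp
    have q9: "(9::nat) \<le> 3 ^ m" using power_increasing[OF m2, of "3::nat"] by simp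
    define z where "z = (\<lambda>i::nat. 0::3)"
    have zC: "z \<in> C" unfolding z_def using F(3) .
    have "C - {z} \<noteq> {}"
    proof
      assume e: "C - {z} = {}"
      have "card (C - {z}) = 0" unfolding e by simp
      then show False using cC q9 zC fC by (simp add: card_Diff_singleton)
    qed
    then obtain x0 where x0: "x0 \<in> C" "x0 \<noteq> z" by auto
    have x0t: "x0 \<in> tvecs n" "tinner n x0 x0 = 0" using x0 F(2) F(4) by auto
    define f where "f = hc n x0 x0"
    have hx: "hc n x x = f" if "x \<in> C" "x \<noteq> z" for x
      unfolding f_def using that F(2) F(4) x0t x0 unfolding z_def by (intro hc_T1) auto
    have cCz: "card (C - {z}) = 3 ^ m - 1" using cC zC fC by (simp add: card_Diff_singleton)
    have sum1: "(\<Sum>x\<in>C. hc n x x) = N + (3 ^ m - 1) * f"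
    proof -
      have "(\<Sum>x\<in>C. hc n x x) = hc n z z + (\<Sum>x\<in>C - {z}. hc n x x)" by (rule sum.remove[OF fC zC])
      also have "(\<Sum>x\<in>C - {z}. hc n x x) = (\<Sum>x\<in>C - {z}. f)" by (rule sum.cong) (auto simp: hx)
      finally show ?thesis using cCz unfolding z_def N_def by (simp add: hc_00)
    qed
    define Y where "Y = card (Yset n x0)"
    have NQe: "3 * int (NQ n 0) = 3 ^ n + 2 * 3 ^ m" using NQ_4k[of k] n4 mk by simp
    have Yx: "9 * (card (Yset n x) + 3) + 2 * 3 ^ n = 9 * NQ n 0" if "x \<in> C" "x \<noteq> z" for x
    proof -
      have xt: "x \<in> tvecs n" "tinner n x x = 0" using that F(2) F(4) by auto
      show ?thesis using Yset_card[OF xt(1) _ xt(2)] iso_perp_count[OF xt(1) _ xt(2)] that(2) unfolding z_def by simp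
    qed
    have YY: "card (Yset n x) = Y" if "x \<in> C" "x \<noteq> z" for x
      using Yx[OF that] Yx[OF x0] unfolding Y_def by simp
    define R where "R = (\<Sum>y\<in>C. hc n x0 y)"
    have row: "(\<Sum>y\<in>C. hc n x y) * Y = f * (3 * Y + (3^m - 3) * (3^m - 3))" if "x \<in> C" "x \<noteq> z" for x
      using row_sum[OF C nm m2 that(1)] that hx YY unfolding z_def by simp
    have Ypos: "Y > 0"
    proof -
      have "9 * (Y + 3) + 2 * 3 ^ n = 9 * NQ n 0" using Yx[OF x0] unfolding Y_def .
      then have "int (9 * (Y + 3) + 2 * 3 ^ n) = int (9 * NQ n 0)" by simp
      then have "9 * int Y + 27 + 2 * 3 ^ n = 3 * 3 ^ n + 6 * 3 ^ m" using NQe by simp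
      moreover have "(3::int) ^ n = 3 ^ m * 3 ^ m" unfolding nm by (simp add: power_add[symmetric] mult_2)
      moreover have "(9::int) \<le> 3 ^ m" using q9 by (metis of_nat_le_iff of_nat_numeral of_nat_power)
      ultimately have "9 * int Y = 3^m * 3^m + 6 * 3^m - 27" by simp
      moreover have "(3::int)^m * 3^m + 6 * 3^m - 27 > 0"
      proof -
        have "(9::int) * 9 \<le> 3^m * 3^m" using \<open>(9::int) \<le> 3 ^ m\<close> by (intro mult_mono) auto
        then show ?thesis using \<open>(9::int) \<le> 3 ^ m\<close> by linarith
      qed
      ultimately show ?thesis by simp
    qed
    have rowr: "real (\<Sum>y\<in>C. hc n x y) = real f * (3 * real Y + (real (3^m) - 3)^2) / real Y"
      if "x \<in> C" "x \<noteq> z" for x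
    proof -
      have "real ((\<Sum>y\<in>C. hc n x y) * Y) = real (f * (3 * Y + (3^m - 3) * (3^m - 3)))" using row[OF that] by simp
      moreover have "real (3^m - 3 :: nat) = real (3^m) - 3" using q9 by (simp add: of_nat_diff)
      ultimately have "real (\<Sum>y\<in>C. hc n x y) * real Y = real f * (3 * real Y + (real (3^m) - 3)^2)"
        by (simp add: power2_eq_square)
      then show ?thesis using Ypos by (simp add: field_simps)
    qed
    have sum2: "real (\<Sum>x\<in>C. \<Sum>y\<in>C. hc n x y) = real (\<Sum>x\<in>C. hc n x x)
        + (real (3^m) - 1) * (real f * (3 * real Y + (real (3^m) - 3)^2) / real Y)"
    proof -
      have "(\<Sum>x\<in>C. \<Sum>y\<in>C. hc n x y) = (\<Sum>y\<in>C. hc n z y) + (\<Sum>x\<in>C - {z}. \<Sum>y\<in>C. hc n x y)"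
        by (rule sum.remove[OF fC zC])
      also have "(\<Sum>y\<in>C. hc n z y) = (\<Sum>x\<in>C. hc n x x)" unfolding z_def hc_0l ..
      finally have e: "real (\<Sum>x\<in>C. \<Sum>y\<in>C. hc n x y) = real (\<Sum>x\<in>C. hc n x x) + (\<Sum>x\<in>C - {z}. real (\<Sum>y\<in>C. hc n x y))"
        by simp
      have "(\<Sum>x\<in>C - {z}. real (\<Sum>y\<in>C. hc n x y)) = (\<Sum>x\<in>C - {z}. real f * (3 * real Y + (real (3^m) - 3)^2) / real Y)"
      proof (rule sum.cong)
        fix x assume "x \<in> C - {z}"
        then show "real (\<Sum>y\<in>C. hc n x y) = real f * (3 * real Y + (real (3^m) - 3)^2) / real Y"
          using rowr[of x] by blast
      qed simp
      also have "\<dots> = (real (3^m) - 1) * (real f * (3 * real Y + (real (3^m) - 3)^2) / real Y)"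
        using cCz q9 by (simp add: of_nat_diff)
      finally show ?thesis using e by simp
    qed
    have d1: "N * (3 ^ m - 1) = (NQ n 0 - 1) * f"
      unfolding N_def f_def using D1[OF x0t(1) _ x0t(2) nm] x0(2) unfolding z_def by simp
    define q where "q = real (3 ^ m)"
    have NQ1: "NQ n 0 \<ge> 1"
    proof -
      have "(0::int) < 3 ^ n + 2 * 3 ^ m" by (simp add: add_pos_pos)
      then have "0 < 3 * int (NQ n 0)" using NQe by simp
      then show ?thesis by simp
    qed
    have h1: "real N * (q - 1) = (real (NQ n 0) - 1) * real f"
    proof -
      have "real (N * (3 ^ m - 1)) = real ((NQ n 0 - 1) * f)" using d1 by simp
      then show ?thesis unfolding q_def using q9 NQ1 by (simp add: of_nat_diff)
    qed
    have pn: "(3::real) ^ n = q^2" unfolding q_def nm power2_eq_square by (simp add: mult_2 power_add)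
    have h2: "3 * real (NQ n 0) = q^2 + 2 * q"
    proof -
      have "real_of_int (3 * int (NQ n 0)) = real_of_int (3 ^ n + 2 * 3 ^ m)" using NQe by simp
      then show ?thesis using pn unfolding q_def by simp
    qed
    have h3: "9 * (real Y + 3) + 2 * q^2 = 9 * real (NQ n 0)"
    proof -
      have "real (9 * (Y + 3) + 2 * 3 ^ n) = real (9 * NQ n 0)" using Yx[OF x0] unfolding Y_def by simp
      then show ?thesis using pn by simp
    qed
    have qq: "q \<ge> 9" unfolding q_def using q9 by (metis of_nat_le_iff of_nat_numeral)
    note fa = final_alg[OF h1 h2 h3 qq, of ] 
    have fa1: "(real N + (q - 1) * real f) / real N = 4 - 4 / (q / 3 + 1)"
      using final_alg(1)[OF h1 h2 h3 qq] Npos by simp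
    have fa2: "(real N + (q - 1) * real f + (q - 1) * (real f * (3 * real Y + (q - 3)^2) / real Y)) / real N
        = 40 * q^2 / ((q + 3) * (q + 9))"
      using final_alg(2)[OF h1 h2 h3 qq] Npos by simp
    have p: "(3::real) powi (int m - 1) = q / 3" unfolding q_def using power_int_diff[of "3::real" "int m" 1] by simp
    have S1r: "real (\<Sum>x\<in>C. hc n x x) = real N + (q - 1) * real f"
      unfolding sum1 q_def using q9 by (simp add: of_nat_diff)
    show ?thesis
      unfolding s1 s2 sum2 S1r N_def[symmetric] m_def[symmetric] p
      using fa1 fa2 unfolding q_def by simp
  qed
qed

end
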